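(* Let $G$ be a torsion-free group, $\mathbb{F}$ a field, $\mathsf{a}$ a unit in $\mathbb{F}[G]$ with $|supp(\mathsf{a})|=4$ and $|S_{\mathsf{a}}|=10$, and $\mathsf{b}$ a mate of $\mathsf{a}$. Then one of the following holds: (i) there exist distinct non-trivial $x,y\in G$ and $\mathsf{a}',\mathsf{b}'\in\mathbb{F}[G]$ with $supp(\mathsf{a}')=\{1,x,x^{-1},y\}$, $\mathsf{a}'\mathsf{b}'=1$ and $U(\mathsf{a},\mathsf{b})\cong U(\mathsf{a}',\mathsf{b}')$; (ii) there exist distinct non-trivial $x,y\in G$ and $\mathsf{a}',\mathsf{b}'\in\mathbb{F}[G]$ with $supp(\mathsf{a}')=\{1,x,y,xy\}$, $\mathsf{a}'\mathsf{b}'=1$ and $U(\mathsf{a},\mathsf{b})\cong U(\mathsf{a}',\mathsf{b}')$.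
   Context: $supp(\gamma)=\{x\in G:\gamma_x\ne0\}$; $S_{\mathsf{a}}=\{h^{-1}h':h\ne h',\ h,h'\in supp(\mathsf{a})\}$. A mate of $\mathsf{a}$ is an element $\mathsf{b}$ with $\mathsf{a}\mathsf{b}=1$ of minimal support size among all $\mathsf{b}'$ with $\mathsf{a}\mathsf{b}'=1$. For $\mathsf{c}\mathsf{d}=1$, $U(\mathsf{c},\mathsf{d})$ is the multigraph with vertex set $supp(\mathsf{d})$ whose edges are the sets $\{(h,h',g,g'),(h',h,g',g)\}$ with $h,h'\in supp(\mathsf{c})$, $g,g'\in supp(\mathsf{d})$, $g\ne g'$, $hg=h'g'$, each joining $g$ and $g'$. Isomorphism $\cong$ means a pair of bijections on vertices and on edges preserving adjacency and non-adjacency of vertices and of edges. *)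

theory Defs
  imports "HOL-Algebra.Group"
begin

definition supp :: "('g \<Rightarrow> 'k::zero) \<Rightarrow> 'g set" where
  "supp f = {x. f x \<noteq> 0}"

definition grp_ring :: "('g, 'm) monoid_scheme \<Rightarrow> ('g \<Rightarrow> 'k::field) set" where
  "grp_ring G = {f. finite (supp f) \<and> supp f \<subseteq> carrier G}"

definition gr_mult :: "('g, 'm) monoid_scheme \<Rightarrow> ('g \<Rightarrow> 'k::field) \<Rightarrow> ('g \<Rightarrow> 'k) \<Rightarrow> ('g \<Rightarrow> 'k)" where
  "gr_mult G a b = (\<lambda>g. \<Sum>p\<in>{(h, k). h \<in> supp a \<and> k \<in> supp b \<and> h \<otimes>\<^bsub>G\<^esub> k = g}. a (fst p) * b (snd p))"

definition gr_one :: "('g, 'm) monoid_scheme \<Rightarrow> ('g \<Rightarrow> 'k::field)" where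
  "gr_one G = (\<lambda>g. if g = \<one>\<^bsub>G\<^esub> then 1 else 0)"

definition gr_unit :: "('g, 'm) monoid_scheme \<Rightarrow> ('g \<Rightarrow> 'k::field) \<Rightarrow> bool" where
  "gr_unit G a \<longleftrightarrow> a \<in> grp_ring G \<and>
     (\<exists>b\<in>grp_ring G. gr_mult G a b = gr_one G \<and> gr_mult G b a = gr_one G)"

definition is_mate :: "('g, 'm) monoid_scheme \<Rightarrow> ('g \<Rightarrow> 'k::field) \<Rightarrow> ('g \<Rightarrow> 'k) \<Rightarrow> bool" where
  "is_mate G a b \<longleftrightarrow> b \<in> grp_ring G \<and> gr_mult G a b = gr_one G \<and>
     (\<forall>b'\<in>grp_ring G. gr_mult G a b' = gr_one G \<longrightarrow> card (supp b) \<le> card (supp b'))"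

definition S_set :: "('g, 'm) monoid_scheme \<Rightarrow> ('g \<Rightarrow> 'k::zero) \<Rightarrow> 'g set" where
  "S_set G a = {inv\<^bsub>G\<^esub> h \<otimes>\<^bsub>G\<^esub> h' | h h'. h \<noteq> h' \<and> h \<in> supp a \<and> h' \<in> supp a}"

definition torsion_free :: "('g, 'm) monoid_scheme \<Rightarrow> bool" where
  "torsion_free G \<longleftrightarrow> (\<forall>x\<in>carrier G. x \<noteq> \<one>\<^bsub>G\<^esub> \<longrightarrow> (\<forall>n::nat. n > 0 \<longrightarrow> x [^]\<^bsub>G\<^esub> n \<noteq> \<one>\<^bsub>G\<^esub>))"

definition U_vertices :: "('g \<Rightarrow> 'k::zero) \<Rightarrow> 'g set" where
  "U_vertices d = supp d"

definition U_edges :: "('g, 'm) monoid_scheme \<Rightarrow> ('g \<Rightarrow> 'k::zero) \<Rightarrow> ('g \<Rightarrow> 'k) \<Rightarrow> ('g \<times> 'g \<times> 'g \<times> 'g) set set" where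
  "U_edges G c d = {{(h, h', g, g'), (h', h, g', g)} | h h' g g'.
      h \<in> supp c \<and> h' \<in> supp c \<and> g \<in> supp d \<and> g' \<in> supp d \<and> g \<noteq> g' \<and>
      h \<otimes>\<^bsub>G\<^esub> g = h' \<otimes>\<^bsub>G\<^esub> g'}"

definition edge_ends :: "('g \<times> 'g \<times> 'g \<times> 'g) set \<Rightarrow> 'g set" where
  "edge_ends e = (\<lambda>t. fst (snd (snd t))) ` e"

definition U_adj_vertices :: "('g, 'm) monoid_scheme \<Rightarrow> ('g \<Rightarrow> 'k::zero) \<Rightarrow> ('g \<Rightarrow> 'k) \<Rightarrow> 'g \<Rightarrow> 'g \<Rightarrow> bool" where
  "U_adj_vertices G c d v w \<longleftrightarrow> (\<exists>e\<in>U_edges G c d. edge_ends e = {v, w})"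

definition adj_edges :: "('g \<times> 'g \<times> 'g \<times> 'g) set \<Rightarrow> ('g \<times> 'g \<times> 'g \<times> 'g) set \<Rightarrow> bool" where
  "adj_edges e f \<longleftrightarrow> edge_ends e \<inter> edge_ends f \<noteq> {}"

definition U_iso :: "('g, 'm) monoid_scheme \<Rightarrow> ('g \<Rightarrow> 'k::zero) \<Rightarrow> ('g \<Rightarrow> 'k) \<Rightarrow> ('g \<Rightarrow> 'k) \<Rightarrow> ('g \<Rightarrow> 'k) \<Rightarrow> bool" where
  "U_iso G c d c' d' \<longleftrightarrow>
     (\<exists>\<phi> \<psi>. bij_betw \<phi> (U_vertices d) (U_vertices d') \<and>
            bij_betw \<psi> (U_edges G c d) (U_edges G c' d') \<and>
            (\<forall>v\<in>U_vertices d. \<forall>w\<in>U_vertices d.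
                U_adj_vertices G c d v w \<longleftrightarrow> U_adj_vertices G c' d' (\<phi> v) (\<phi> w)) \<and>
            (\<forall>e\<in>U_edges G c d. \<forall>f\<in>U_edges G c d.
                adj_edges e f \<longleftrightarrow> adj_edges (\<psi> e) (\<psi> f)))"

end

theory Submission
  imports Defs
begin

context group begin

lemma ca:
  "x \<in> carrier G \<Longrightarrow> y \<in> carrier G \<Longrightarrow> x \<otimes> (inv x \<otimes> y) = y"
  "x \<in> carrier G \<Longrightarrow> y \<in> carrier G \<Longrightarrow> inv x \<otimes> (x \<otimes> y) = y"
  by (simp_all add: m_assoc[symmetric])

lemma transl_mult:
  assumes k: "k \<in> carrier G" and a: "a \<in> grp_ring G" and b: "b \<in> grp_ring G"
    and ab: "gr_mult G a b = gr_one G"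
    and a'_def: "a' = (\<lambda>g. if g \<in> carrier G then a (k \<otimes> g) else 0)"
    and b'_def: "b' = (\<lambda>g. if g \<in> carrier G then b (g \<otimes> inv k) else 0)"
  shows "supp a' = (\<lambda>h. inv k \<otimes> h) ` supp a" "supp b' = (\<lambda>h. h \<otimes> k) ` supp b"
    "a' \<in> grp_ring G" "b' \<in> grp_ring G" "gr_mult G a' b' = gr_one G"
proof -
  have Ac: "supp a \<subseteq> carrier G" "finite (supp a)" using a by (auto simp: grp_ring_def)
  have Bc: "supp b \<subseteq> carrier G" "finite (supp b)" using b by (auto simp: grp_ring_def)
  show sa: "supp a' = (\<lambda>h. inv k \<otimes> h) ` supp a"
  proof
    show "supp a' \<subseteq> (\<lambda>h. inv k \<otimes> h) ` supp a"
    proof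
      fix x assume "x \<in> supp a'"
      then have x: "x \<in> carrier G" "k \<otimes> x \<in> supp a" by (auto simp: supp_def a'_def split: if_splits)
      have "x = inv k \<otimes> (k \<otimes> x)" using x k by (simp add: m_assoc ca)
      then show "x \<in> (\<lambda>h. inv k \<otimes> h) ` supp a" using x by blast
    qed
    show "(\<lambda>h. inv k \<otimes> h) ` supp a \<subseteq> supp a'"
    proof
      fix x assume "x \<in> (\<lambda>h. inv k \<otimes> h) ` supp a"
      then obtain h where h: "h \<in> supp a" "x = inv k \<otimes> h" by blast
      have hc: "h \<in> carrier G" using h Ac by blast
      have "k \<otimes> x = h" using h hc k by (simp add: m_assoc ca)
      then show "x \<in> supp a'" using h hc k by (auto simp: supp_def a'_def)
    qed
  qed
  show sb: "supp b' = (\<lambda>h. h \<otimes> k) ` supp b"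
  proof
    show "supp b' \<subseteq> (\<lambda>h. h \<otimes> k) ` supp b"
    proof
      fix x assume "x \<in> supp b'"
      then have x: "x \<in> carrier G" "x \<otimes> inv k \<in> supp b" by (auto simp: supp_def b'_def split: if_splits)
      have "x = (x \<otimes> inv k) \<otimes> k" using x k by (simp add: m_assoc ca)
      then show "x \<in> (\<lambda>h. h \<otimes> k) ` supp b" using x by blast
    qed
    show "(\<lambda>h. h \<otimes> k) ` supp b \<subseteq> supp b'"
    proof
      fix x assume "x \<in> (\<lambda>h. h \<otimes> k) ` supp b"
      then obtain h where h: "h \<in> supp b" "x = h \<otimes> k" by blast
      have hc: "h \<in> carrier G" using h Bc by blast
      have "x \<otimes> inv k = h" using h hc k by (simp add: m_assoc ca)
      then show "x \<in> supp b'" using h hc k by (auto simp: supp_def b'_def)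
    qed
  qed
  show "a' \<in> grp_ring G" using Ac k by (auto simp: grp_ring_def sa)
  show "b' \<in> grp_ring G" using Bc k by (auto simp: grp_ring_def sb)
  show "gr_mult G a' b' = gr_one G"
  proof
    fix g
    show "gr_mult G a' b' g = gr_one G g"
    proof (cases "g \<in> carrier G")
      case False
      have E: "{(h, m). h \<in> supp a' \<and> m \<in> supp b' \<and> h \<otimes> m = g} = {}"
        using False Ac Bc k by (auto simp: sa sb)
      moreover have "gr_one G g = 0" using False by (auto simp: gr_one_def)
      ultimately show ?thesis unfolding gr_mult_def E by simp
    next
      case True
      define g0 where "g0 = k \<otimes> g \<otimes> inv k"
      define T2 where "T2 = (\<lambda>(p, q). (inv k \<otimes> p, q \<otimes> k))"
      define P0 where "P0 = {(h, m). h \<in> supp a \<and> m \<in> supp b \<and> h \<otimes> m = g0}"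
      have g0c: "g0 \<in> carrier G" using True k by (simp add: g0_def)
      have eq: "{(h, m). h \<in> supp a' \<and> m \<in> supp b' \<and> h \<otimes> m = g} = T2 ` P0"
      proof
        show "{(h, m). h \<in> supp a' \<and> m \<in> supp b' \<and> h \<otimes> m = g} \<subseteq> T2 ` P0"
        proof clarify
          fix h m assume hm: "h \<in> supp a'" "m \<in> supp b'" "g = h \<otimes> m"
          obtain p where p: "p \<in> supp a" "h = inv k \<otimes> p" using hm sa by blast
          obtain q where q: "q \<in> supp b" "m = q \<otimes> k" using hm sb by blast
          have pc: "p \<in> carrier G" "q \<in> carrier G" using p q Ac Bc by auto
          have "inv k \<otimes> p \<otimes> (q \<otimes> k) = g" using hm p q by simp
          then have "k \<otimes> (inv k \<otimes> p \<otimes> (q \<otimes> k)) \<otimes> inv k = g0" by (simp add: g0_def)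
          then have "p \<otimes> q = g0" using pc k by (simp add: m_assoc ca)
          then show "(h, m) \<in> T2 ` P0" using p q unfolding P0_def T2_def by force
        qed
        show "T2 ` P0 \<subseteq> {(h, m). h \<in> supp a' \<and> m \<in> supp b' \<and> h \<otimes> m = g}"
        proof clarify
          fix h m p q assume pq: "(p, q) \<in> P0" and hm: "(h, m) = T2 (p, q)"
          have pc: "p \<in> carrier G" "q \<in> carrier G" "p \<in> supp a" "q \<in> supp b" "p \<otimes> q = g0"
            using pq Ac Bc by (auto simp: P0_def)
          have h: "h = inv k \<otimes> p" "m = q \<otimes> k" using hm by (auto simp: T2_def)
          have "inv k \<otimes> (k \<otimes> g \<otimes> inv k) \<otimes> k = g" using True k by (simp add: m_assoc ca)
          then have "inv k \<otimes> (p \<otimes> q) \<otimes> k = g" using pc k by (simp add: g0_def[symmetric])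
          moreover have "inv k \<otimes> p \<otimes> (q \<otimes> k) = inv k \<otimes> (p \<otimes> q) \<otimes> k" using pc(1,2) k by (simp add: m_assoc)
          ultimately have "inv k \<otimes> p \<otimes> (q \<otimes> k) = g" by simp
          then show "h \<in> supp a' \<and> m \<in> supp b' \<and> h \<otimes> m = g" using pc h sa sb by auto
        qed
      qed
      have inj: "inj_on T2 P0"
      proof (rule inj_onI, clarify)
        fix p q p' q' assume "(p, q) \<in> P0" "(p', q') \<in> P0" "T2 (p, q) = T2 (p', q')"
        then have c: "p \<in> carrier G" "p' \<in> carrier G" "q \<in> carrier G" "q' \<in> carrier G"
          "inv k \<otimes> p = inv k \<otimes> p'" "q \<otimes> k = q' \<otimes> k"
          using Ac Bc by (auto simp: P0_def T2_def)
        then show "p = p' \<and> q = q'" using k by simp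
      qed
      have "gr_mult G a' b' g = (\<Sum>x\<in>T2 ` P0. a' (fst x) * b' (snd x))"
        unfolding gr_mult_def eq by simp
      also have "\<dots> = (\<Sum>x\<in>P0. a' (fst (T2 x)) * b' (snd (T2 x)))"
        by (simp add: sum.reindex[OF inj])
      also have "\<dots> = (\<Sum>x\<in>P0. a (fst x) * b (snd x))"
      proof (rule sum.cong, simp, clarify)
        fix p q assume "(p, q) \<in> P0"
        then have pc: "p \<in> carrier G" "q \<in> carrier G" using Ac Bc by (auto simp: P0_def)
        then show "a' (fst (T2 (p, q))) * b' (snd (T2 (p, q))) = a (fst (p, q)) * b (snd (p, q))"
          using k by (simp add: T2_def a'_def b'_def m_assoc ca)
      qed
      also have "\<dots> = gr_mult G a b g0" by (simp add: gr_mult_def P0_def)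
      also have "\<dots> = gr_one G g0" using ab by simp
      also have "\<dots> = gr_one G g"
      proof -
        have "g0 = \<one> \<longleftrightarrow> g = \<one>"
        proof
          assume "g0 = \<one>"
          then have "inv k \<otimes> g0 \<otimes> k = \<one>" using k by simp
          then show "g = \<one>" using True k by (simp add: g0_def m_assoc ca)
        next
          assume "g = \<one>" then show "g0 = \<one>" using k by (simp add: g0_def)
        qed
        then show ?thesis by (simp add: gr_one_def)
      qed
      finally show ?thesis .
    qed
  qed
qed



lemma transl_iso:
  assumes k: "k \<in> carrier G" and Ac: "supp a \<subseteq> carrier G" and Bc: "supp b \<subseteq> carrier G"
    and sa: "supp a' = (\<lambda>h. inv k \<otimes> h) ` supp a" and sb: "supp b' = (\<lambda>h. h \<otimes> k) ` supp b"
  shows "U_iso G a b a' b'"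
proof -
  define T where "T = (\<lambda>(h, h', g, g'). (inv k \<otimes> h, inv k \<otimes> h', g \<otimes> k, g' \<otimes> k))"
  define f where "f = (\<lambda>v. v \<otimes> k)"
  define C where "C = carrier G \<times> carrier G \<times> carrier G \<times> carrier G"
  have ends: "edge_ends (T ` e) = f ` edge_ends e" for e
    unfolding edge_ends_def image_image by (rule image_cong) (auto simp: T_def f_def split: prod.splits)
  have injT: "inj_on T C"
    by (rule inj_onI) (use k in \<open>auto simp: T_def C_def\<close>)
  have injf: "inj_on f (carrier G)"
    by (rule inj_onI) (use k in \<open>auto simp: f_def\<close>)
  have EC: "e \<subseteq> C" if "e \<in> U_edges G a b" for e
    using that Ac Bc by (auto simp: U_edges_def C_def)
  have endsC: "edge_ends e \<subseteq> carrier G" if "e \<in> U_edges G a b" for e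
    using that Bc by (auto simp: U_edges_def edge_ends_def)
  have edges: "U_edges G a' b' = (\<lambda>e. T ` e) ` U_edges G a b"
  proof
    show "U_edges G a' b' \<subseteq> (\<lambda>e. T ` e) ` U_edges G a b"
    proof
      fix e' assume "e' \<in> U_edges G a' b'"
      then obtain h h' g g' where e': "e' = {(h, h', g, g'), (h', h, g', g)}"
        "h \<in> supp a'" "h' \<in> supp a'" "g \<in> supp b'" "g' \<in> supp b'" "g \<noteq> g'"
        "h \<otimes> g = h' \<otimes> g'" unfolding U_edges_def by blast
      obtain p where p: "p \<in> supp a" "h = inv k \<otimes> p" using e' sa by blast
      obtain p' where p': "p' \<in> supp a" "h' = inv k \<otimes> p'" using e' sa by blast
      obtain q where q: "q \<in> supp b" "g = q \<otimes> k" using e' sb by blast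
      obtain q' where q': "q' \<in> supp b" "g' = q' \<otimes> k" using e' sb by blast
      have c: "p \<in> carrier G" "p' \<in> carrier G" "q \<in> carrier G" "q' \<in> carrier G"
        using p p' q q' Ac Bc by auto
      have "q \<noteq> q'" using e' q q' by auto
      have "inv k \<otimes> (p \<otimes> q) \<otimes> k = inv k \<otimes> (p' \<otimes> q') \<otimes> k"
        using e'(7) p p' q q' c k by (simp add: m_assoc)
      then have "p \<otimes> q = p' \<otimes> q'" using c k by simp
      then have "{(p, p', q, q'), (p', p, q', q)} \<in> U_edges G a b"
        unfolding U_edges_def using p p' q q' \<open>q \<noteq> q'\<close> by blast
      moreover have "e' = T ` {(p, p', q, q'), (p', p, q', q)}"
        using e' p p' q q' by (simp add: T_def)
      ultimately show "e' \<in> (\<lambda>e. T ` e) ` U_edges G a b" by blast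
    qed
    show "(\<lambda>e. T ` e) ` U_edges G a b \<subseteq> U_edges G a' b'"
    proof
      fix e' assume "e' \<in> (\<lambda>e. T ` e) ` U_edges G a b"
      then obtain e where e: "e' = T ` e" "e \<in> U_edges G a b" by blast
      then obtain p p' q q' where pq: "e = {(p, p', q, q'), (p', p, q', q)}"
        "p \<in> supp a" "p' \<in> supp a" "q \<in> supp b" "q' \<in> supp b" "q \<noteq> q'"
        "p \<otimes> q = p' \<otimes> q'" unfolding U_edges_def by blast
      have c: "p \<in> carrier G" "p' \<in> carrier G" "q \<in> carrier G" "q' \<in> carrier G"
        using pq Ac Bc by auto
      have "inv k \<otimes> p \<otimes> (q \<otimes> k) = inv k \<otimes> p' \<otimes> (q' \<otimes> k)"
      proof -
        have "inv k \<otimes> p \<otimes> (q \<otimes> k) = inv k \<otimes> (p \<otimes> q) \<otimes> k" using c k by (simp add: m_assoc)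
        also have "\<dots> = inv k \<otimes> (p' \<otimes> q') \<otimes> k" using pq by simp
        also have "\<dots> = inv k \<otimes> p' \<otimes> (q' \<otimes> k)" using c k by (simp add: m_assoc)
        finally show ?thesis .
      qed
      moreover have "q \<otimes> k \<noteq> q' \<otimes> k" using c k pq by simp
      moreover have "inv k \<otimes> p \<in> supp a'" "inv k \<otimes> p' \<in> supp a'" "q \<otimes> k \<in> supp b'" "q' \<otimes> k \<in> supp b'"
        using pq sa sb by auto
      moreover have "e' = {(inv k \<otimes> p, inv k \<otimes> p', q \<otimes> k, q' \<otimes> k), (inv k \<otimes> p', inv k \<otimes> p, q' \<otimes> k, q \<otimes> k)}"
        using e pq by (simp add: T_def)
      ultimately show "e' \<in> U_edges G a' b'" unfolding U_edges_def by blast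
    qed
  qed
  have injE: "inj_on (\<lambda>e. T ` e) (U_edges G a b)"
  proof (rule inj_onI)
    fix e1 e2 assume "e1 \<in> U_edges G a b" "e2 \<in> U_edges G a b" "T ` e1 = T ` e2"
    then show "e1 = e2" using inj_on_image_eq_iff[OF injT EC EC] by blast
  qed
  show ?thesis
    unfolding U_iso_def
  proof (intro exI conjI ballI)
    show "bij_betw f (U_vertices b) (U_vertices b')"
      unfolding U_vertices_def sb f_def
      by (rule bij_betw_imageI) (use injf Bc f_def inj_on_subset in auto)
    show "bij_betw (\<lambda>e. T ` e) (U_edges G a b) (U_edges G a' b')"
      unfolding edges by (rule bij_betw_imageI[OF injE refl])
  next
    fix v w assume v: "v \<in> U_vertices b" and w: "w \<in> U_vertices b"
    have vw: "{v, w} \<subseteq> carrier G" using v w Bc by (auto simp: U_vertices_def)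
    show "U_adj_vertices G a b v w = U_adj_vertices G a' b' (f v) (f w)"
    proof
      assume "U_adj_vertices G a b v w"
      then obtain e where e: "e \<in> U_edges G a b" "edge_ends e = {v, w}" by (auto simp: U_adj_vertices_def)
      have "T ` e \<in> U_edges G a' b'" using e edges by blast
      moreover have "edge_ends (T ` e) = {f v, f w}" using e by (simp add: ends)
      ultimately show "U_adj_vertices G a' b' (f v) (f w)"
        unfolding U_adj_vertices_def by blast
    next
      assume "U_adj_vertices G a' b' (f v) (f w)"
      then obtain e' where e': "e' \<in> U_edges G a' b'" "edge_ends e' = {f v, f w}"
        unfolding U_adj_vertices_def by blast
      then obtain e where e: "e \<in> U_edges G a b" "e' = T ` e" using edges by blast
      then have "f ` edge_ends e = {f v, f w}" using e' by (simp add: ends)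
      then have "f ` edge_ends e = f ` {v, w}" by simp
      then have "edge_ends e = {v, w}" using inj_on_image_eq_iff[OF injf endsC[OF e(1)] vw] by simp
      then show "U_adj_vertices G a b v w" using e(1) unfolding U_adj_vertices_def by blast
    qed
  next
    fix e1 e2 assume e1: "e1 \<in> U_edges G a b" and e2: "e2 \<in> U_edges G a b"
    have "edge_ends (T ` e1) \<inter> edge_ends (T ` e2) = f ` (edge_ends e1 \<inter> edge_ends e2)"
      unfolding ends using inj_on_image_Int[OF injf endsC[OF e1] endsC[OF e2]] by simp
    then show "adj_edges e1 e2 = adj_edges (T ` e1) (T ` e2)"
      unfolding adj_edges_def by simp
  qed
qed


lemma transl:
  assumes k: "k \<in> carrier G" and a: "a \<in> grp_ring G" and b: "b \<in> grp_ring G"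
    and ab: "gr_mult G a b = gr_one G"
  shows "\<exists>a' b'. a' \<in> grp_ring G \<and> b' \<in> grp_ring G \<and> supp a' = (\<lambda>h. inv k \<otimes> h) ` supp a \<and>
           gr_mult G a' b' = gr_one G \<and> U_iso G a b a' b'"
proof -
  define a' where "a' = (\<lambda>g. if g \<in> carrier G then a (k \<otimes> g) else 0)"
  define b' where "b' = (\<lambda>g. if g \<in> carrier G then b (g \<otimes> inv k) else 0)"
  note M = transl_mult[OF k a b ab a'_def b'_def]
  have "U_iso G a b a' b'"
    by (rule transl_iso[OF k _ _ M(1) M(2)]) (use a b in \<open>auto simp: grp_ring_def\<close>)
  then show ?thesis using M by blast
qed

lemma inv_mul_one: "x \<in> carrier G \<Longrightarrow> y \<in> carrier G \<Longrightarrow> inv x \<otimes> y = \<one> \<longleftrightarrow> y = x"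
  by (metis ca(1) r_one inv_closed r_inv)

lemma inv_mul_eq: "x \<in> carrier G \<Longrightarrow> y \<in> carrier G \<Longrightarrow> z \<in> carrier G \<Longrightarrow> inv x \<otimes> y = inv x \<otimes> z \<longleftrightarrow> y = z"
  by simp

lemma four_elems:
  assumes "card A = 4" "p \<in> A" "q \<in> A" "r \<in> A" "p \<noteq> q" "q \<noteq> r" "p \<noteq> r"
  obtains d where "d \<in> A" "d \<noteq> p" "d \<noteq> q" "d \<noteq> r" "A = {p, q, r, d}"
proof -
  have fin: "finite A" using assms(1) by (metis card.infinite zero_neq_numeral)
  have "card {p, q, r} = 3" using assms by simp
  moreover have "{p, q, r} \<subseteq> A" using assms by blast
  ultimately have "card (A - {p, q, r}) = 1" using assms(1) fin by (simp add: card_Diff_subset)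
  then have "A - {p, q, r} \<noteq> {}" by (metis card.empty zero_neq_one)
  then obtain d where d: "d \<in> A" "d \<noteq> p" "d \<noteq> q" "d \<noteq> r" by blast
  have "{p, q, r, d} \<subseteq> A" using d assms by blast
  moreover have "card {p, q, r, d} = 4" using d assms by simp
  ultimately have "{p, q, r, d} = A" using fin assms(1) by (metis card_subset_eq)
  then show ?thesis using that d by blast
qed

lemma case_i:
  assumes a: "a \<in> grp_ring G" and b: "b \<in> grp_ring G" and ab: "gr_mult G a b = gr_one G"
    and A4: "card (supp a) = 4" and pqr: "p \<in> supp a" "q \<in> supp a" "r \<in> supp a"
    and ne: "p \<noteq> q" "q \<noteq> r" "p \<noteq> r" and eq: "inv p \<otimes> q = inv q \<otimes> r"
  shows "\<exists>x\<in>carrier G. \<exists>y\<in>carrier G. x \<noteq> y \<and> x \<noteq> \<one> \<and> y \<noteq> \<one> \<and>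
            (\<exists>a' b'. a' \<in> grp_ring G \<and> b' \<in> grp_ring G \<and>
               supp a' = {\<one>, x, inv x, y} \<and> gr_mult G a' b' = gr_one G \<and>
               U_iso G a b a' b')"
proof -
  obtain d where d: "d \<in> supp a" "d \<noteq> p" "d \<noteq> q" "d \<noteq> r" "supp a = {p, q, r, d}"
    using four_elems[OF A4 pqr ne] by blast
  have Ac: "supp a \<subseteq> carrier G" using a by (auto simp: grp_ring_def)
  have c: "p \<in> carrier G" "q \<in> carrier G" "r \<in> carrier G" "d \<in> carrier G" using pqr d Ac by auto
  define x where "x = inv q \<otimes> r"
  define y where "y = inv q \<otimes> d"
  have xc: "x \<in> carrier G" "y \<in> carrier G" using c by (auto simp: x_def y_def)
  have ip: "inv q \<otimes> p = inv x"
  proof -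
    have "inv q \<otimes> p = inv (inv p \<otimes> q)" using c by (simp add: inv_mult_group)
    then show ?thesis using eq by (simp add: x_def)
  qed
  obtain a' b' where ab': "a' \<in> grp_ring G" "b' \<in> grp_ring G" "supp a' = (\<lambda>h. inv q \<otimes> h) ` supp a"
    "gr_mult G a' b' = gr_one G" "U_iso G a b a' b'" using transl[OF c(2) a b ab] by blast
  have "supp a' = {inv q \<otimes> p, inv q \<otimes> q, inv q \<otimes> r, inv q \<otimes> d}" using ab'(3) d(5) by simp
  also have "\<dots> = {inv x, \<one>, x, y}" using c(2) ip unfolding x_def y_def by simp
  also have "\<dots> = {\<one>, x, inv x, y}" by blast
  finally have "supp a' = {\<one>, x, inv x, y}" .
  moreover have "x \<noteq> \<one>" "y \<noteq> \<one>" "x \<noteq> y" using c ne d by (auto simp: x_def y_def inv_mul_one)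
  ultimately show ?thesis using xc ab' by blast
qed

lemma case_ii:
  assumes a: "a \<in> grp_ring G" and b: "b \<in> grp_ring G" and ab: "gr_mult G a b = gr_one G"
    and A4: "card (supp a) = 4" and pqr: "h \<in> supp a" "h' \<in> supp a" "k \<in> supp a" "k' \<in> supp a"
    and ne: "h \<noteq> h'" "h' \<noteq> k" "h \<noteq> k" "k \<noteq> k'" "h \<noteq> k'" "h' \<noteq> k'"
    and eq: "inv h \<otimes> h' = inv k \<otimes> k'"
  shows "\<exists>x\<in>carrier G. \<exists>y\<in>carrier G. x \<noteq> y \<and> x \<noteq> \<one> \<and> y \<noteq> \<one> \<and>
            (\<exists>a' b'. a' \<in> grp_ring G \<and> b' \<in> grp_ring G \<and>
               supp a' = {\<one>, x, y, x \<otimes> y} \<and> gr_mult G a' b' = gr_one G \<and>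
               U_iso G a b a' b')"
proof -
  obtain d where d: "d \<in> supp a" "d \<noteq> h" "d \<noteq> h'" "d \<noteq> k" "supp a = {h, h', k, d}"
    using four_elems[OF A4 pqr(1-3) ne(1-3)] by blast
  have dk: "d = k'" using d pqr ne by auto
  have Ac: "supp a \<subseteq> carrier G" using a by (auto simp: grp_ring_def)
  have c: "h \<in> carrier G" "h' \<in> carrier G" "k \<in> carrier G" "k' \<in> carrier G" using pqr Ac by auto
  define x where "x = inv h \<otimes> k"
  define y where "y = inv h \<otimes> h'"
  have xc: "x \<in> carrier G" "y \<in> carrier G" using c by (auto simp: x_def y_def)
  have xy: "x \<otimes> y = inv h \<otimes> k'"
  proof -
    have "x \<otimes> y = inv h \<otimes> (k \<otimes> (inv k \<otimes> k'))" using c eq by (simp add: x_def y_def m_assoc)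
    then show ?thesis using c by (simp add: ca)
  qed
  obtain a' b' where ab': "a' \<in> grp_ring G" "b' \<in> grp_ring G" "supp a' = (\<lambda>g. inv h \<otimes> g) ` supp a"
    "gr_mult G a' b' = gr_one G" "U_iso G a b a' b'" using transl[OF c(1) a b ab] by blast
  have "supp a' = {inv h \<otimes> h, inv h \<otimes> h', inv h \<otimes> k, inv h \<otimes> k'}" using ab'(3) d(5) dk by simp
  also have "\<dots> = {\<one>, y, x, x \<otimes> y}" using c(1) xy unfolding x_def y_def by simp
  also have "\<dots> = {\<one>, x, y, x \<otimes> y}" by blast
  finally have "supp a' = {\<one>, x, y, x \<otimes> y}" .
  moreover have "x \<noteq> \<one>" "y \<noteq> \<one>" "x \<noteq> y" using c ne by (auto simp: x_def y_def inv_mul_one)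
  ultimately show ?thesis using xc ab' by blast
qed


lemma main_aux:
  assumes tf: "torsion_free G" and a: "a \<in> grp_ring G" and b: "b \<in> grp_ring G"
    and ab: "gr_mult G a b = gr_one G"
    and A4: "card (supp a) = 4" and S10: "card (S_set G a) = 10"
  shows "(\<exists>x\<in>carrier G. \<exists>y\<in>carrier G. x \<noteq> y \<and> x \<noteq> \<one> \<and> y \<noteq> \<one> \<and>
            (\<exists>a' b'. a' \<in> grp_ring G \<and> b' \<in> grp_ring G \<and>
               supp a' = {\<one>, x, inv x, y} \<and> gr_mult G a' b' = gr_one G \<and>
               U_iso G a b a' b'))
       \<or> (\<exists>x\<in>carrier G. \<exists>y\<in>carrier G. x \<noteq> y \<and> x \<noteq> \<one> \<and> y \<noteq> \<one> \<and>
            (\<exists>a' b'. a' \<in> grp_ring G \<and> b' \<in> grp_ring G \<and>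
               supp a' = {\<one>, x, y, x \<otimes> y} \<and> gr_mult G a' b' = gr_one G \<and>
               U_iso G a b a' b'))"
proof -
  define A where "A = supp a"
  have fin: "finite A" and Ac: "A \<subseteq> carrier G" using a by (auto simp: grp_ring_def A_def)
  define D where "D = {(h, h'). h \<in> A \<and> h' \<in> A \<and> h \<noteq> h'}"
  define F where "F = (\<lambda>(h, h'). inv h \<otimes> h')"
  have S: "S_set G a = F ` D" unfolding S_set_def F_def D_def A_def by auto
  have D2: "D = A \<times> A - (\<lambda>x. (x, x)) ` A" unfolding D_def by blast
  have "card ((\<lambda>x. (x, x)) ` A) = 4" using A4 unfolding A_def[symmetric]
    by (subst card_image) (auto simp: inj_on_def)
  moreover have "card (A \<times> A) = 16" using A4 unfolding A_def[symmetric] by (simp add: card_cartesian_product)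
  moreover have "(\<lambda>x. (x, x)) ` A \<subseteq> A \<times> A" by blast
  ultimately have cD: "card D = 12" unfolding D2 using fin by (simp add: card_Diff_subset)
  have "\<not> inj_on F D"
  proof
    assume "inj_on F D"
    then have "card (F ` D) = 12" using cD by (simp add: card_image)
    then show False using S S10 by simp
  qed
  then obtain u v where uv: "u \<in> D" "v \<in> D" "u \<noteq> v" "F u = F v" unfolding inj_on_def by blast
  obtain h h' where u: "u = (h, h')" by (cases u)
  obtain k k' where v: "v = (k, k')" by (cases v)
  have mem: "h \<in> A" "h' \<in> A" "k \<in> A" "k' \<in> A" "h \<noteq> h'" "k \<noteq> k'"
    using uv u v by (auto simp: D_def)
  have c: "h \<in> carrier G" "h' \<in> carrier G" "k \<in> carrier G" "k' \<in> carrier G" using mem Ac by auto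
  have eq: "inv h \<otimes> h' = inv k \<otimes> k'" using uv u v by (simp add: F_def)
  have hk: "h \<noteq> k"
  proof
    assume "h = k"
    then have "h' = k'" using eq c by simp
    then show False using uv u v \<open>h = k\<close> by simp
  qed
  have hk': "h' \<noteq> k'"
  proof
    assume "h' = k'"
    then have "inv h = inv k" using eq c by simp
    then have "h = k" using c by (metis inv_inv)
    then show False using hk by simp
  qed
  show ?thesis
  proof (cases "h' = k")
    case True
    show ?thesis
    proof (cases "h = k'")
      case True2: True
      define t where "t = inv h \<otimes> k"
      have tc: "t \<in> carrier G" using c by (simp add: t_def)
      have t1: "t \<noteq> \<one>" using c hk by (simp add: t_def inv_mul_one)
      have "t \<otimes> t = inv h \<otimes> k \<otimes> (inv k \<otimes> h)" using eq True True2 by (simp add: t_def)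
      also have "\<dots> = \<one>" using c by (simp add: m_assoc ca)
      finally have "t [^] (2::nat) = \<one>" using tc by (simp add: numeral_2_eq_2 nat_pow_Suc)
      moreover have "t [^] (2::nat) \<noteq> \<one>" using tf tc t1 unfolding torsion_free_def by auto
      ultimately show ?thesis by simp
    next
      case False
      have "inv h \<otimes> k = inv k \<otimes> k'" using eq True by simp
      then show ?thesis
        using case_i[OF a b ab A4 mem(1,3,4)[unfolded A_def]] hk False mem True by blast
    qed
  next
    case False
    show ?thesis
    proof (cases "h = k'")
      case True
      have "inv k \<otimes> h = inv h \<otimes> h'" using eq True by simp
      then show ?thesis
        using case_i[OF a b ab A4 mem(3,1,2)[unfolded A_def]] hk False mem True by blast
    next
      case False2: False
      show ?thesis
        using case_ii[OF a b ab A4 mem(1-4)[unfolded A_def] mem(5) False hk mem(6) False2 hk' eq] by blast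
    qed
  qed
qed

end

theorem mainTheorem14:
  fixes G :: "'g monoid" and a b :: "'g \<Rightarrow> 'k::field"
  assumes "group G"
    and "torsion_free G"
    and "gr_unit G a"
    and "card (supp a) = 4"
    and "card (S_set G a) = 10"
    and "is_mate G a b"
  shows "(\<exists>x\<in>carrier G. \<exists>y\<in>carrier G. x \<noteq> y \<and> x \<noteq> \<one>\<^bsub>G\<^esub> \<and> y \<noteq> \<one>\<^bsub>G\<^esub> \<and>
            (\<exists>a' b'. a' \<in> grp_ring G \<and> b' \<in> grp_ring G \<and>
               supp a' = {\<one>\<^bsub>G\<^esub>, x, inv\<^bsub>G\<^esub> x, y} \<and> gr_mult G a' b' = gr_one G \<and>
               U_iso G a b a' b'))
       \<or> (\<exists>x\<in>carrier G. \<exists>y\<in>carrier G. x \<noteq> y \<and> x \<noteq> \<one>\<^bsub>G\<^esub> \<and> y \<noteq> \<one>\<^bsub>G\<^esub> \<and>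
            (\<exists>a' b'. a' \<in> grp_ring G \<and> b' \<in> grp_ring G \<and>
               supp a' = {\<one>\<^bsub>G\<^esub>, x, y, x \<otimes>\<^bsub>G\<^esub> y} \<and> gr_mult G a' b' = gr_one G \<and>
               U_iso G a b a' b'))"
  proof -
  from assms(6) have b: "b \<in> grp_ring G" "gr_mult G a b = gr_one G" by (simp_all add: is_mate_def)
  from assms(3) have a: "a \<in> grp_ring G" by (simp add: gr_unit_def)
  show ?thesis by (rule group.main_aux[OF assms(1,2) a b assms(4,5)])
qed

end
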